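(* Let $a,b\ge0$ and let $w\in\tilde S_3$ be the affine Grassmannian element with $\lambda(w)=(2^a1^b)$. Then the number of reduced words of $w$ is $|R(w)|=\binom{\lfloor b/2+a\rfloor}{a}$.
   Context: $\tilde S_3$ is realized as bijections $w:\mathbb Z\to\mathbb Z$ with $w(i+3)=w(i)+3$, $w(1)+w(2)+w(3)=6$, generated by $s_0,s_1,s_2$; $R(w)$ is its set of reduced words. $w$ is affine Grassmannian if $w(1)<w(2)<w(3)$. The code $c(u)=(c_1,c_2,c_3)$, $c_i=\#\{j\in\mathbb Z:j>i,u(j)<u(i)\}$; $\lambda(w)$ is the partition conjugate to the decreasing rearrangement of $c(w^{-1})$; $w\mapsto\lambda(w)$ is a bijection from affine Grassmannian elements to partitions with all parts $<3$. *)

theory Defs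
  imports Complex_Main
begin

definition affine_perm3 :: "(int \<Rightarrow> int) \<Rightarrow> bool" where
  "affine_perm3 w \<longleftrightarrow> bij w \<and> (\<forall>i. w (i + 3) = w i + 3) \<and> w 1 + w 2 + w 3 = 6"

definition sref :: "nat \<Rightarrow> int \<Rightarrow> int" where
  "sref i j = (if j mod 3 = int i mod 3 then j + 1
               else if j mod 3 = (int i + 1) mod 3 then j - 1 else j)"

definition word_prod :: "nat list \<Rightarrow> int \<Rightarrow> int" where
  "word_prod ws = foldr (\<lambda>i f. sref i \<circ> f) ws id"

definition is_word :: "nat list \<Rightarrow> bool" where
  "is_word ws \<longleftrightarrow> set ws \<subseteq> {0, 1, 2}"

definition affine_length :: "(int \<Rightarrow> int) \<Rightarrow> nat" where
  "affine_length w = (LEAST n. \<exists>ws. is_word ws \<and> length ws = n \<and> word_prod ws = w)"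

definition reduced_words :: "(int \<Rightarrow> int) \<Rightarrow> nat list set" where
  "reduced_words w = {ws. is_word ws \<and> word_prod ws = w \<and> length ws = affine_length w}"

definition affine_grassmannian :: "(int \<Rightarrow> int) \<Rightarrow> bool" where
  "affine_grassmannian w \<longleftrightarrow> w 1 < w 2 \<and> w 2 < w 3"

definition code3 :: "(int \<Rightarrow> int) \<Rightarrow> nat list" where
  "code3 u = map (\<lambda>i. card {j::int. j > i \<and> u j < u i}) [1, 2, 3]"

text \<open>Conjugate of a partition (given as a list of naturals; zero parts ignored).\<close>
definition conj_part :: "nat list \<Rightarrow> nat list" where
  "conj_part mu = map (\<lambda>k. length (filter (\<lambda>x. k \<le> x) mu)) [1..<Suc (Max (set (0 # mu)))]"

definition lam :: "(int \<Rightarrow> int) \<Rightarrow> nat list" where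
  "lam w = conj_part (rev (sort (code3 (inv w))))"

end

theory Submission
  imports Defs
begin


definition fw :: "int \<Rightarrow> int \<Rightarrow> int \<Rightarrow> int \<Rightarrow> int" where
  "fw x1 x2 x3 j = (if (j-1) mod 3 = 0 then x1 else if (j-1) mod 3 = 1 then x2 else x3) + 3*((j-1) div 3)"

lemma sref_shift: "sref k (x + 3*q) = sref k x + 3*q"
  unfolding sref_def by auto

lemma sref_fw: "sref k \<circ> fw x1 x2 x3 = fw (sref k x1) (sref k x2) (sref k x3)"
  by (rule ext) (simp add: fw_def sref_shift)

lemma fw_id: "fw 1 2 3 = id"
proof (rule ext)
  fix j :: int
  show "fw 1 2 3 j = id j" unfolding fw_def by simp presburger
qed

lemma periodic_m:
  assumes "\<forall>i. f (i + 3) = f i + (3::int)"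
  shows "f (i + 3*m) = f i + 3*m"
proof -
  have pos: "f (i + 3*int n) = f i + 3*int n" for n i
  proof (induction n arbitrary: i)
    case (Suc n)
    have "f (i + 3*int (Suc n)) = f ((i + 3*int n) + 3)" by (simp add: algebra_simps)
    also have "\<dots> = f (i + 3*int n) + 3" using assms by simp
    also have "\<dots> = f i + 3*int (Suc n)" using Suc by simp
    finally show ?case .
  qed simp
  show ?thesis
  proof (cases "m \<ge> 0")
    case True then show ?thesis using pos[of i "nat m"] by simp
  next
    case False
    have "f ((i + 3*m) + 3*int (nat (-m))) = f (i + 3*m) + 3*int (nat (-m))" by (rule pos)
    then show ?thesis using False by simp
  qed
qed

lemma periodic_fw:
  assumes "\<forall>i. f (i + 3) = f i + (3::int)"
  shows "f = fw (f 1) (f 2) (f 3)"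
proof (rule ext)
  fix j :: int
  have j: "j = ((j-1) mod 3 + 1) + 3*((j-1) div 3)" by simp
  have "f j = f ((j-1) mod 3 + 1) + 3*((j-1) div 3)"
    by (subst j, rule periodic_m[OF assms])
  moreover have "(j-1) mod 3 = 0 \<or> (j-1) mod 3 = 1 \<or> (j-1) mod 3 = 2" by presburger
  ultimately show "f j = fw (f 1) (f 2) (f 3) j" unfolding fw_def by auto
qed

definition Lw :: "int \<Rightarrow> int \<Rightarrow> int \<Rightarrow> nat" where
  "Lw x1 x2 x3 = nat \<bar>(x2-x1) div 3\<bar> + nat \<bar>(x3-x1) div 3\<bar> + nat \<bar>(x3-x2) div 3\<bar>"

definition good3 :: "int \<Rightarrow> int \<Rightarrow> int \<Rightarrow> bool" where
  "good3 x1 x2 x3 \<longleftrightarrow> x1 mod 3 \<noteq> x2 mod 3 \<and> x1 mod 3 \<noteq> x3 mod 3 \<and> x2 mod 3 \<noteq> x3 mod 3"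

definition E :: "int \<Rightarrow> int \<Rightarrow> int" where
  "E r \<rho> = (if r = \<rho> then 1 else if r = (\<rho>+1) mod 3 then -1 else 0)"

lemma sref_E: "sref k x = x + E (x mod 3) (int k mod 3)"
  unfolding sref_def E_def by (simp add: mod_add_left_eq)

lemma divshift: "(y - x + d) div 3 = (y div 3 - x div 3) + (y mod 3 - x mod 3 + d) div (3::int)"
proof -
  have "y - x + d = (y mod 3 - x mod 3 + d) + 3 * (y div 3 - x div 3)"
    by (simp add: algebra_simps)
  then show ?thesis by (metis div_mult_self2 zero_neq_numeral)
qed

lemma small_case: "r \<in> {0,1,2} \<Longrightarrow> s \<in> {0,1,2} \<Longrightarrow> \<rho> \<in> {0,1,2} \<Longrightarrow> r \<noteq> s \<Longrightarrow>
   (s - r + (E s \<rho> - E r \<rho>)) div 3 = (s - r) div 3 +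
  (if r = \<rho> \<and> s = (\<rho>+1) mod 3 then -1 else if s = \<rho> \<and> r = (\<rho>+1) mod 3 then 1 else 0)"
  by (elim insertE emptyE; simp add: E_def)

lemma mod3_cases: "(x::int) mod 3 \<in> {0,1,2}" by auto

lemma pair_step: "x mod 3 \<noteq> y mod 3 \<Longrightarrow> (sref k y - sref k x) div 3 = (y - x) div 3 +
  (if x mod 3 = int k mod 3 \<and> y mod 3 = (int k mod 3+1) mod 3 then -1
   else if y mod 3 = int k mod 3 \<and> x mod 3 = (int k mod 3+1) mod 3 then 1 else 0)"
proof -
  assume ne: "x mod 3 \<noteq> y mod 3"
  have "(sref k y - sref k x) div 3 = (y - x + (E (y mod 3) (int k mod 3) - E (x mod 3) (int k mod 3))) div 3"
    by (simp add: sref_E algebra_simps)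
  also have "\<dots> = (y div 3 - x div 3) + (y mod 3 - x mod 3 + (E (y mod 3) (int k mod 3) - E (x mod 3) (int k mod 3))) div 3"
    by (rule divshift)
  also have "\<dots> = (y div 3 - x div 3) + ((y mod 3 - x mod 3) div 3 +
  (if x mod 3 = int k mod 3 \<and> y mod 3 = (int k mod 3+1) mod 3 then -1
   else if y mod 3 = int k mod 3 \<and> x mod 3 = (int k mod 3+1) mod 3 then 1 else 0))"
    using small_case[OF mod3_cases[of x] mod3_cases[of y] mod3_cases[of "int k"] ne] by (rule arg_cong)
  moreover have "(y div 3 - x div 3) + (y mod 3 - x mod 3) div 3 = (y - x) div 3"
    using divshift[of y x 0] by simp
  ultimately show ?thesis by simp
qed

definition C :: "int \<Rightarrow> int \<Rightarrow> int \<Rightarrow> int" where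
  "C r s \<rho> = (if r = \<rho> \<and> s = (\<rho>+1) mod 3 then -1 else if s = \<rho> \<and> r = (\<rho>+1) mod 3 then 1 else 0)"

lemma pair_stepC: "x mod 3 \<noteq> y mod 3 \<Longrightarrow> (sref k y - sref k x) div 3 = (y - x) div 3 + C (x mod 3) (y mod 3) (int k mod 3)"
  unfolding C_def by (rule pair_step)

lemma one_change: "r1 \<in> {0,1,2} \<Longrightarrow> r2 \<in> {0,1,2} \<Longrightarrow> r3 \<in> {0,1,2} \<Longrightarrow> \<rho> \<in> {0,1,2} \<Longrightarrow>
  r1 \<noteq> r2 \<Longrightarrow> r1 \<noteq> r3 \<Longrightarrow> r2 \<noteq> r3 \<Longrightarrow>
  (\<bar>C r1 r2 \<rho>\<bar> = 1 \<and> C r1 r3 \<rho> = 0 \<and> C r2 r3 \<rho> = 0) \<or>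
  (C r1 r2 \<rho> = 0 \<and> \<bar>C r1 r3 \<rho>\<bar> = 1 \<and> C r2 r3 \<rho> = 0) \<or>
  (C r1 r2 \<rho> = 0 \<and> C r1 r3 \<rho> = 0 \<and> \<bar>C r2 r3 \<rho>\<bar> = 1)"
  by (elim insertE emptyE; simp add: C_def)

lemma res_perm: "r \<in> {0,1,2} \<Longrightarrow> s \<in> {0,1,2} \<Longrightarrow> \<rho> \<in> {0,1,2} \<Longrightarrow> r \<noteq> s \<Longrightarrow>
  (r + E r \<rho>) mod 3 \<noteq> (s + E s \<rho>) mod 3"
  by (elim insertE emptyE; simp add: E_def)

lemma sref_mod: "sref k x mod 3 = (x mod 3 + E (x mod 3) (int k mod 3)) mod 3"
  unfolding sref_E by (simp add: mod_add_left_eq)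

lemma good3_step: "good3 x1 x2 x3 \<Longrightarrow> good3 (sref k x1) (sref k x2) (sref k x3)"
  unfolding good3_def sref_mod using res_perm[OF mod3_cases mod3_cases mod3_cases] by blast

lemma arith3: "(\<bar>c1\<bar> = 1 \<and> c2 = 0 \<and> c3 = 0) \<or> (c1 = 0 \<and> \<bar>c2\<bar> = 1 \<and> c3 = 0) \<or> (c1 = 0 \<and> c2 = 0 \<and> \<bar>c3\<bar> = (1::int)) \<Longrightarrow>
  nat \<bar>D1+c1\<bar> + nat \<bar>D2+c2\<bar> + nat \<bar>D3+c3\<bar> = nat \<bar>D1\<bar> + nat \<bar>D2\<bar> + nat \<bar>D3\<bar> + 1 \<or>
  nat \<bar>D1\<bar> + nat \<bar>D2\<bar> + nat \<bar>D3\<bar> = nat \<bar>D1+c1\<bar> + nat \<bar>D2+c2\<bar> + nat \<bar>D3+c3\<bar> + 1"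
  by (elim disjE conjE; simp; arith)

lemma Lw_step: assumes "good3 x1 x2 x3"
  shows "Lw (sref k x1) (sref k x2) (sref k x3) = Lw x1 x2 x3 + 1 \<or> Lw x1 x2 x3 = Lw (sref k x1) (sref k x2) (sref k x3) + 1"
proof -
  have n: "x1 mod 3 \<noteq> x2 mod 3" "x1 mod 3 \<noteq> x3 mod 3" "x2 mod 3 \<noteq> x3 mod 3" using assms good3_def by auto
  note oc = one_change[OF mod3_cases[of x1] mod3_cases[of x2] mod3_cases[of x3] mod3_cases[of "int k"] n]
  show ?thesis unfolding Lw_def pair_stepC[OF n(1)] pair_stepC[OF n(2)] pair_stepC[OF n(3)]
    by (rule arith3[OF oc])
qed

lemma fw_vals[simp]: "fw x1 x2 x3 1 = x1" "fw x1 x2 x3 2 = x2" "fw x1 x2 x3 3 = x3"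
  by (simp_all add: fw_def)

lemma word_prod_Nil[simp]: "word_prod [] = id" by (simp add: word_prod_def)
lemma word_prod_Cons[simp]: "word_prod (k#ws) = sref k \<circ> word_prod ws" by (simp add: word_prod_def)

lemma E_inv: "r \<in> {0,1,2} \<Longrightarrow> \<rho> \<in> {0,1,2} \<Longrightarrow> E r \<rho> + E ((r + E r \<rho>) mod 3) \<rho> = 0"
  by (elim insertE emptyE; simp add: E_def)

lemma sref_sref[simp]: "sref k (sref k x) = x"
proof -
  have "sref k (sref k x) = x + E (x mod 3) (int k mod 3) + E ((x mod 3 + E (x mod 3) (int k mod 3)) mod 3) (int k mod 3)"
    by (simp add: sref_E mod_add_left_eq)
  then show ?thesis using E_inv[OF mod3_cases mod3_cases, of x "int k"] by simp
qed

lemma sref_comp_cancel[simp]: "sref k \<circ> (sref k \<circ> f) = f"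
  by (rule ext) simp

definition good :: "(int \<Rightarrow> int) \<Rightarrow> bool" where
  "good f \<longleftrightarrow> (\<exists>x1 x2 x3. f = fw x1 x2 x3 \<and> good3 x1 x2 x3)"

definition Lf :: "(int \<Rightarrow> int) \<Rightarrow> nat" where
  "Lf f = Lw (f 1) (f 2) (f 3)"

lemma good_step: "good f \<Longrightarrow> good (sref k \<circ> f)"
  unfolding good_def using sref_fw good3_step by metis

lemma Lf_step: "good f \<Longrightarrow> Lf (sref k \<circ> f) = Lf f + 1 \<or> Lf f = Lf (sref k \<circ> f) + 1"
  unfolding good_def Lf_def using Lw_step sref_fw by (metis comp_apply fw_vals)

lemma good_id: "good id"
proof -
  have "good3 1 2 3" by (simp add: good3_def)
  then show ?thesis using fw_id unfolding good_def by metis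
qed

lemma good_word: "good (word_prod ws)"
  by (induction ws) (simp_all only: word_prod_Nil word_prod_Cons good_id good_step)

lemma Lf_id: "Lf id = 0" unfolding Lf_def Lw_def by simp

lemma Lf_word: "Lf (word_prod ws) \<le> length ws"
proof (induction ws)
  case Nil then show ?case unfolding word_prod_Nil Lf_id by simp
next
  case (Cons k ws)
  have a: "Lf (sref k \<circ> word_prod ws) = Lf (word_prod ws) + 1 \<or> Lf (word_prod ws) = Lf (sref k \<circ> word_prod ws) + 1"
    by (rule Lf_step[OF good_word])
  from a Cons.IH have "Lf (sref k \<circ> word_prod ws) \<le> Suc (length ws)" by linarith
  then show ?case by (simp only: word_prod_Cons length_Cons)
qed

definition Sn :: "(int \<Rightarrow> int) \<Rightarrow> nat \<Rightarrow> nat list set" where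
  "Sn f n = {ws. is_word ws \<and> word_prod ws = f \<and> length ws = n}"

lemma Sn_finite: "finite (Sn f n)"
proof -
  have "Sn f n \<subseteq> {ws. set ws \<subseteq> {0,1,2} \<and> length ws = n}" unfolding Sn_def is_word_def by auto
  then show ?thesis using finite_lists_length_eq[of "{0,1,2::nat}" n] finite_subset by blast
qed

lemma Sn_empty: "Lf g > n \<Longrightarrow> Sn g n = {}"
proof -
  assume "Lf g > n"
  { fix ws assume "ws \<in> Sn g n"
    then have "word_prod ws = g" "length ws = n" unfolding Sn_def by auto
    then have False using Lf_word[of ws] \<open>Lf g > n\<close> by simp }
  then show ?thesis by blast
qed

lemma Sn_0: "Sn id 0 = {[]}"
  unfolding Sn_def is_word_def by auto

lemma Sn_Suc: "Sn f (Suc n) = (\<Union>k\<in>{0,1,2}. Cons k ` Sn (sref k \<circ> f) n)"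
proof
  show "Sn f (Suc n) \<subseteq> (\<Union>k\<in>{0,1,2}. Cons k ` Sn (sref k \<circ> f) n)"
  proof
    fix ws assume "ws \<in> Sn f (Suc n)"
    then obtain k ws' where ws: "ws = k # ws'" "length ws' = n" "k \<in> {0,1,2}" "is_word ws'" "sref k \<circ> word_prod ws' = f"
      unfolding Sn_def is_word_def by (cases ws) auto
    then have "word_prod ws' = sref k \<circ> f" by auto
    then show "ws \<in> (\<Union>k\<in>{0,1,2}. Cons k ` Sn (sref k \<circ> f) n)" using ws unfolding Sn_def by blast
  qed
next
  show "(\<Union>k\<in>{0,1,2}. Cons k ` Sn (sref k \<circ> f) n) \<subseteq> Sn f (Suc n)"
    unfolding Sn_def is_word_def by auto
qed

lemma card_Sn_Suc: "card (Sn f (Suc n)) = (\<Sum>k\<in>{0,1,2::nat}. card (Sn (sref k \<circ> f) n))"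
proof -
  have "card (\<Union>k\<in>{0,1,2}. Cons k ` Sn (sref k \<circ> f) n) = (\<Sum>k\<in>{0,1,2::nat}. card (Cons k ` Sn (sref k \<circ> f) n))"
    by (rule card_UN_disjoint) (auto simp: Sn_finite)
  also have "\<dots> = (\<Sum>k\<in>{0,1,2::nat}. card (Sn (sref k \<circ> f) n))"
    by (rule sum.cong) (auto simp: card_image)
  finally show ?thesis by (simp only: Sn_Suc)
qed

lemma sref0: "int k mod 3 = \<rho> \<Longrightarrow> x mod 3 = \<rho> \<Longrightarrow> sref k x = x + 1"
  unfolding sref_def by simp
lemma E1: "\<rho> \<in> {0,1,2} \<Longrightarrow> E ((\<rho>+1) mod 3) \<rho> = -1" by (elim insertE emptyE; simp add: E_def)
lemma E2: "\<rho> \<in> {0,1,2} \<Longrightarrow> E ((\<rho>+2) mod 3) \<rho> = 0" by (elim insertE emptyE; simp add: E_def)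
lemma sref1: "int k mod 3 = \<rho> \<Longrightarrow> x mod 3 = (\<rho>+1) mod 3 \<Longrightarrow> sref k x = x - 1"
  unfolding sref_E using E1[of \<rho>] mod3_cases[of "int k"] by simp
lemma sref2: "int k mod 3 = \<rho> \<Longrightarrow> x mod 3 = (\<rho>+2) mod 3 \<Longrightarrow> sref k x = x"
  unfolding sref_E using E2[of \<rho>] mod3_cases[of "int k"] by simp

lemma sum_rot: "\<rho> \<in> {0,1,2::int} \<Longrightarrow> (\<Sum>k\<in>{0,1,2::nat}. g k) = g (nat \<rho>) + g (nat ((\<rho>+1) mod 3)) + g (nat ((\<rho>+2) mod 3))"
  by (elim insertE emptyE; simp add: ac_simps)

lemma nat_mod3: "\<rho> \<in> {0,1,2::int} \<Longrightarrow> int (nat \<rho>) mod 3 = \<rho>"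
  by auto

lemma Lf_fw[simp]: "Lf (fw x1 x2 x3) = Lw x1 x2 x3" by (simp add: Lf_def)

definition F :: "nat \<Rightarrow> nat \<Rightarrow> int \<Rightarrow> int" where
  "F a b = fw (1 - int a - int b) (2 - int a + int (b div 2)) (3 + 2*int a + int ((b+1) div 2))"

lemma div3: "0 \<le> r \<Longrightarrow> r < 3 \<Longrightarrow> (3*q + r) div 3 = (q::int)" by simp

lemma Lf_F: "Lf (F a b) = 2*a + b"
proof (cases "even b")
  case True
  then obtain c where b: "b = 2*c" by blast
  have "Lf (F a b) = nat \<bar>(3*int c + 1) div 3\<bar> + nat \<bar>(3*(int a + int c) + 2) div 3\<bar> + nat \<bar>(3*int a + 1) div 3\<bar>"
    unfolding F_def Lf_fw Lw_def b by (simp add: algebra_simps)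
  also have "\<dots> = 2*a+b" unfolding div3[of 1, OF _] div3[of 2] b by simp
  finally show ?thesis .
next
  case False
  then obtain c where b: "b = 2*c+1" using oddE by blast
  have "Lf (F a b) = nat \<bar>(3*int c + 2) div 3\<bar> + nat \<bar>(3*(int a + int c) + 4) div 3\<bar> + nat \<bar>(3*int a + 2) div 3\<bar>"
    unfolding F_def Lf_fw Lw_def b by (simp add: algebra_simps)
  also have "(3*(int a + int c) + 4) div 3 = int a + int c + 1"
    using div3[of 1 "int a + int c + 1"] by (simp add: algebra_simps)
  also have "nat \<bar>(3*int c + 2) div 3\<bar> + nat \<bar>int a + int c + 1\<bar> + nat \<bar>(3*int a + 2) div 3\<bar> = 2*a+b" unfolding div3[of 2] b by simp
  finally show ?thesis .
qed

lemma rot1: "\<rho> \<in> {0,1,2::int} \<Longrightarrow> ((\<rho>+1) mod 3 + 1) mod 3 = (\<rho>+2) mod 3 \<and> ((\<rho>+1) mod 3 + 2) mod 3 = \<rho>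
   \<and> ((\<rho>+2) mod 3 + 1) mod 3 = \<rho> \<and> ((\<rho>+2) mod 3 + 2) mod 3 = (\<rho>+1) mod 3
   \<and> (\<rho>+1) mod 3 \<in> {0,1,2} \<and> (\<rho>+2) mod 3 \<in> {0,1,2}"
  by (elim insertE emptyE; simp)

lemma modeqI: "(x::int) - y = 3 * q \<Longrightarrow> x mod 3 = y mod 3"
  unfolding mod_eq_dvd_iff by simp

lemma step_even:
  assumes IH: "\<And>a' b'. 2*a'+b' < 2*a+2*c \<Longrightarrow> card (Sn (F a' b') (2*a'+b')) = (b' div 2 + a') choose a'"
    and pos: "0 < a + c"
  shows "card (Sn (F a (2*c)) (2*a+2*c)) = (c + a) choose a"
proof -
  obtain m where m: "2*a+2*c = Suc m" using pos by (cases "2*a+2*c") auto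
  define A where "A = int a"
  define C where "C = int c"
  define x1 where "x1 = 1 - A - 2*C"
  define x2 where "x2 = 2 - A + C"
  define x3 where "x3 = 3 + 2*A + C"
  have FF: "F a (2*c) = fw x1 x2 x3" unfolding F_def x1_def x2_def x3_def A_def C_def by simp
  define \<rho> where "\<rho> = (C - A) mod 3"
  have \<rho>: "\<rho> \<in> {0,1,2}" unfolding \<rho>_def using mod3_cases by blast
  note rr = rot1[OF \<rho>]
  define g where "g k = card (Sn (fw (sref k x1) (sref k x2) (sref k x3)) m)" for k
  have "card (Sn (F a (2*c)) (2*a+2*c)) = (\<Sum>k\<in>{0,1,2}. g k)"
    unfolding m FF card_Sn_Suc g_def sref_fw ..
  also have "\<dots> = g (nat \<rho>) + g (nat ((\<rho>+1) mod 3)) + g (nat ((\<rho>+2) mod 3))" by (rule sum_rot[OF \<rho>])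
  finally have sum: "card (Sn (F a (2*c)) (2*a+2*c)) = g (nat \<rho>) + g (nat ((\<rho>+1) mod 3)) + g (nat ((\<rho>+2) mod 3))" .
  have r3: "x3 mod 3 = \<rho>" unfolding \<rho>_def by (rule modeqI[of _ _ "1+A"]) (simp add: x3_def algebra_simps)
  have r1: "x1 mod 3 = (\<rho>+1) mod 3" unfolding \<rho>_def mod_add_left_eq
    by (rule modeqI[of _ _ "-C"]) (simp add: x1_def algebra_simps)
  have r2: "x2 mod 3 = (\<rho>+2) mod 3" unfolding \<rho>_def mod_add_left_eq
    by (rule modeqI[of _ _ "0"]) (simp add: x2_def algebra_simps)
  have k0: "int (nat \<rho>) mod 3 = \<rho>" by (rule nat_mod3[OF \<rho>])
  have k1: "int (nat ((\<rho>+1) mod 3)) mod 3 = (\<rho>+1) mod 3" by (rule nat_mod3[OF mod3_cases])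
  have k2: "int (nat ((\<rho>+2) mod 3)) mod 3 = (\<rho>+2) mod 3" by (rule nat_mod3[OF mod3_cases])
  have g0: "g (nat \<rho>) = 0"
  proof -
    have "g (nat \<rho>) = card (Sn (fw (x1 - 1) x2 (x3 + 1)) m)"
      unfolding g_def sref0[OF k0 r3] sref1[OF k0 r1] sref2[OF k0 r2] ..
    also have "fw (x1 - 1) x2 (x3 + 1) = F a (2*c+1)"
      unfolding F_def x1_def x2_def x3_def A_def C_def by simp
    also have "Sn (F a (2*c+1)) m = {}" by (rule Sn_empty) (use m Lf_F in simp)
    finally show ?thesis by simp
  qed
  have g1: "g (nat ((\<rho>+1) mod 3)) = (if c = 0 then 0 else (c - 1 + a) choose a)"
  proof -
    have "g (nat ((\<rho>+1) mod 3)) = card (Sn (fw (x1 + 1) (x2 - 1) x3) m)"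
    proof -
      have e2: "sref (nat ((\<rho>+1) mod 3)) x2 = x2 - 1" by (rule sref1[OF k1]) (use r2 rr in simp)
      have e3: "sref (nat ((\<rho>+1) mod 3)) x3 = x3" by (rule sref2[OF k1]) (use r3 rr in simp)
      show ?thesis unfolding g_def sref0[OF k1 r1] e2 e3 ..
    qed
    also have "\<dots> = (if c = 0 then 0 else (c - 1 + a) choose a)"
    proof (cases "c = 0")
      case True
      have "Lf (fw (x1 + 1) (x2 - 1) x3) = nat \<bar>(-1) div 3\<bar> + nat \<bar>(3*A+1) div 3\<bar> + nat \<bar>(3*A+2) div 3\<bar>"
        unfolding Lf_fw Lw_def x1_def x2_def x3_def C_def True by (simp add: algebra_simps)
      also have "\<dots> = 2*a+1" unfolding div3[of 1] div3[of 2] A_def by simp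
      finally have "Sn (fw (x1 + 1) (x2 - 1) x3) m = {}" using m True by (intro Sn_empty) simp
      then show ?thesis using True by simp
    next
      case False
      have "fw (x1 + 1) (x2 - 1) x3 = F a (2*(c-1)+1)"
        unfolding F_def x1_def x2_def x3_def A_def C_def using False by (simp add: of_nat_diff)
      moreover have "m = 2*a + (2*(c-1)+1)" using m False by simp
      moreover have "2*a + (2*(c-1)+1) < 2*a + 2*c" using False by simp
      ultimately show ?thesis using IH[of a "2*(c-1)+1"] False by simp
    qed
    finally show ?thesis .
  qed
  have g2: "g (nat ((\<rho>+2) mod 3)) = (if a = 0 then 0 else (c + (a - 1)) choose (a - 1))"
  proof -
    have "g (nat ((\<rho>+2) mod 3)) = card (Sn (fw x1 (x2 + 1) (x3 - 1)) m)"
    proof -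
      have e3: "sref (nat ((\<rho>+2) mod 3)) x3 = x3 - 1" by (rule sref1[OF k2]) (use r3 rr in simp)
      have e1: "sref (nat ((\<rho>+2) mod 3)) x1 = x1" by (rule sref2[OF k2]) (use r1 rr in simp)
      show ?thesis unfolding g_def sref0[OF k2 r2] e1 e3 ..
    qed
    also have "\<dots> = (if a = 0 then 0 else (c + (a - 1)) choose (a - 1))"
    proof (cases "a = 0")
      case True
      have "Lf (fw x1 (x2 + 1) (x3 - 1)) = nat \<bar>(3*C+2) div 3\<bar> + nat \<bar>(3*C+1) div 3\<bar> + nat \<bar>(-1) div 3\<bar>"
        unfolding Lf_fw Lw_def x1_def x2_def x3_def A_def True by (simp add: algebra_simps)
      also have "\<dots> = 2*c+1" unfolding div3[of 1] div3[of 2] C_def by simp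
      finally have "Sn (fw x1 (x2 + 1) (x3 - 1)) m = {}" using m True by (intro Sn_empty) simp
      then show ?thesis using True by simp
    next
      case False
      have "fw x1 (x2 + 1) (x3 - 1) = F (a-1) (2*c+1)"
        unfolding F_def x1_def x2_def x3_def A_def C_def using False by (simp add: of_nat_diff algebra_simps)
      moreover have "m = 2*(a-1) + (2*c+1)" using m False by simp
      moreover have "2*(a-1) + (2*c+1) < 2*a + 2*c" using False by simp
      ultimately show ?thesis using IH[of "a-1" "2*c+1"] False by simp
    qed
    finally show ?thesis .
  qed
  have pascal: "(if c = 0 then 0 else (c - 1 + a) choose a) + (if a = 0 then 0 else (c + (a - 1)) choose (a - 1)) = (c + a) choose a"
  proof (cases "c = 0")
    case True then show ?thesis using pos by (cases a) auto
  next
    case cne: False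
    show ?thesis
    proof (cases "a = 0")
      case True then show ?thesis using cne by simp
    next
      case ane: False
      obtain a' where a': "a = Suc a'" using ane by (cases a) auto
      obtain c' where c': "c = Suc c'" using cne by (cases c) auto
      have "(c + a) choose a = Suc (c + a') choose (Suc a')" by (simp add: a')
      also have "\<dots> = ((c + a') choose a') + ((c + a') choose (Suc a'))" by simp
      finally show ?thesis using a' c' by (simp add: add_ac)
    qed
  qed
  show ?thesis using sum g0 g1 g2 pascal by simp
qed

lemma step_odd:
  assumes IH: "\<And>a' b'. 2*a'+b' < 2*a+(2*c+1) \<Longrightarrow> card (Sn (F a' b') (2*a'+b')) = (b' div 2 + a') choose a'"
  shows "card (Sn (F a (2*c+1)) (2*a+(2*c+1))) = (c + a) choose a"
proof -
  define m where "m = 2*a+2*c"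
  have m: "2*a+(2*c+1) = Suc m" unfolding m_def by simp
  define A where "A = int a"
  define C where "C = int c"
  define x1 where "x1 = - A - 2*C"
  define x2 where "x2 = 2 - A + C"
  define x3 where "x3 = 4 + 2*A + C"
  have FF: "F a (2*c+1) = fw x1 x2 x3" unfolding F_def x1_def x2_def x3_def A_def C_def by (simp add: algebra_simps)
  define \<rho> where "\<rho> = (C - A) mod 3"
  have \<rho>: "\<rho> \<in> {0,1,2}" unfolding \<rho>_def using mod3_cases by blast
  note rr = rot1[OF \<rho>]
  define g where "g k = card (Sn (fw (sref k x1) (sref k x2) (sref k x3)) m)" for k
  have "card (Sn (F a (2*c+1)) (2*a+(2*c+1))) = (\<Sum>k\<in>{0,1,2}. g k)"
    unfolding m FF card_Sn_Suc g_def sref_fw ..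
  also have "\<dots> = g (nat \<rho>) + g (nat ((\<rho>+1) mod 3)) + g (nat ((\<rho>+2) mod 3))" by (rule sum_rot[OF \<rho>])
  finally have sum: "card (Sn (F a (2*c+1)) (2*a+(2*c+1))) = g (nat \<rho>) + g (nat ((\<rho>+1) mod 3)) + g (nat ((\<rho>+2) mod 3))" .
  have r1: "x1 mod 3 = \<rho>" unfolding \<rho>_def by (rule modeqI[of _ _ "-C"]) (simp add: x1_def algebra_simps)
  have r3: "x3 mod 3 = (\<rho>+1) mod 3" unfolding \<rho>_def mod_add_left_eq
    by (rule modeqI[of _ _ "1+A"]) (simp add: x3_def algebra_simps)
  have r2: "x2 mod 3 = (\<rho>+2) mod 3" unfolding \<rho>_def mod_add_left_eq
    by (rule modeqI[of _ _ "0"]) (simp add: x2_def algebra_simps)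
  have k0: "int (nat \<rho>) mod 3 = \<rho>" by (rule nat_mod3[OF \<rho>])
  have k1: "int (nat ((\<rho>+1) mod 3)) mod 3 = (\<rho>+1) mod 3" by (rule nat_mod3[OF mod3_cases])
  have k2: "int (nat ((\<rho>+2) mod 3)) mod 3 = (\<rho>+2) mod 3" by (rule nat_mod3[OF mod3_cases])
  have g0: "g (nat \<rho>) = (c + a) choose a"
  proof -
    have "g (nat \<rho>) = card (Sn (fw (x1 + 1) x2 (x3 - 1)) m)"
      unfolding g_def sref0[OF k0 r1] sref1[OF k0 r3] sref2[OF k0 r2] ..
    also have "fw (x1 + 1) x2 (x3 - 1) = F a (2*c)"
      unfolding F_def x1_def x2_def x3_def A_def C_def by (simp add: algebra_simps)
    also have "card (Sn (F a (2*c)) m) = (c + a) choose a"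
      using IH[of a "2*c"] unfolding m_def by simp
    finally show ?thesis .
  qed
  have g1: "g (nat ((\<rho>+1) mod 3)) = 0"
  proof -
    have e2: "sref (nat ((\<rho>+1) mod 3)) x2 = x2 - 1" by (rule sref1[OF k1]) (use r2 rr in simp)
    have e1: "sref (nat ((\<rho>+1) mod 3)) x1 = x1" by (rule sref2[OF k1]) (use r1 rr in simp)
    have "g (nat ((\<rho>+1) mod 3)) = card (Sn (fw x1 (x2 - 1) (x3 + 1)) m)"
      unfolding g_def sref0[OF k1 r3] e1 e2 ..
    also have "Sn (fw x1 (x2 - 1) (x3 + 1)) m = {}"
    proof (rule Sn_empty)
      have "Lf (fw x1 (x2 - 1) (x3 + 1)) = nat \<bar>(3*C+1) div 3\<bar> + nat \<bar>(3*(A+C+1)+2) div 3\<bar> + nat \<bar>(3*(A+1)+1) div 3\<bar>"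
        unfolding Lf_fw Lw_def x1_def x2_def x3_def by (simp add: algebra_simps)
      also have "\<dots> = m + 2" unfolding div3[of 1] div3[of 2] A_def C_def m_def by simp
      finally show "m < Lf (fw x1 (x2 - 1) (x3 + 1))" by simp
    qed
    finally show ?thesis by simp
  qed
  have g2: "g (nat ((\<rho>+2) mod 3)) = 0"
  proof -
    have e1: "sref (nat ((\<rho>+2) mod 3)) x1 = x1 - 1" by (rule sref1[OF k2]) (use r1 rr in simp)
    have e3: "sref (nat ((\<rho>+2) mod 3)) x3 = x3" by (rule sref2[OF k2]) (use r3 rr in simp)
    have "g (nat ((\<rho>+2) mod 3)) = card (Sn (fw (x1 - 1) (x2 + 1) x3) m)"
      unfolding g_def sref0[OF k2 r2] e1 e3 ..
    also have "Sn (fw (x1 - 1) (x2 + 1) x3) m = {}"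
    proof (rule Sn_empty)
      have "Lf (fw (x1 - 1) (x2 + 1) x3) = nat \<bar>(3*(C+1)+1) div 3\<bar> + nat \<bar>(3*(A+C+1)+2) div 3\<bar> + nat \<bar>(3*A+1) div 3\<bar>"
        unfolding Lf_fw Lw_def x1_def x2_def x3_def by (simp add: algebra_simps)
      also have "\<dots> = m + 2" unfolding div3[of 1] div3[of 2] A_def C_def m_def by simp
      finally show "m < Lf (fw (x1 - 1) (x2 + 1) x3)" by simp
    qed
    finally show ?thesis by simp
  qed
  show ?thesis using sum g0 g1 g2 by simp
qed

lemma count_F: "card (Sn (F a b) (2*a+b)) = (b div 2 + a) choose a"
proof (induction "2*a+b" arbitrary: a b rule: less_induct)
  case less
  show ?case
  proof (cases "even b")
    case True
    then obtain c where b: "b = 2*c" by blast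
    show ?thesis
    proof (cases "a + c = 0")
      case True
      then have "a = 0" "b = 0" using b by auto
      moreover have "F 0 0 = id" unfolding F_def using fw_id by simp
      ultimately show ?thesis using Sn_0 by simp
    next
      case False
      have "card (Sn (F a (2*c)) (2*a+2*c)) = (c + a) choose a"
        by (rule step_even) (use less b False in auto)
      then show ?thesis using b by simp
    qed
  next
    case False
    then obtain c where b: "b = 2*c+1" using oddE by blast
    have "card (Sn (F a (2*c+1)) (2*a+(2*c+1))) = (c + a) choose a"
      by (rule step_odd) (use less b in auto)
    then show ?thesis using b by simp
  qed
qed



lemma sort3: "z \<le> y \<Longrightarrow> y \<le> (x::nat) \<Longrightarrow> l \<in> {[x,y,z],[x,z,y],[y,x,z],[y,z,x],[z,x,y],[z,y,x]} \<Longrightarrow> rev (sort l) = [x,y,z]"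
  by auto

lemma le_div3: "(m \<le> X div 3) = (3*m \<le> (X::int))" by presburger
lemma div3_lt: "(X div 3 < m) = (X < 3*(m::int))" by presburger

lemma inj_res: "r \<in> {1,2,3} \<Longrightarrow> r' \<in> {1,2,3} \<Longrightarrow> r + 3*m = r' + 3*m' \<Longrightarrow> r = r' \<and> m = (m'::int)"
  by (elim insertE emptyE; presburger)

lemma D_formula:
  assumes per: "\<forall>i. w (i + 3) = w i + (3::int)"
  shows "card {t. t < s \<and> w s < w t} = (\<Sum>r\<in>{1,2,3::int}. nat ((s-r-1) div 3 - (w s - w r) div 3))"
proof -
  define lo where "lo r = (w s - w r) div 3" for r
  define hi where "hi r = (s - r - 1) div 3" for r
  define \<Phi> where "\<Phi> = (\<lambda>(r,m). r + 3*(m::int))"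
  have eq: "{t. t < s \<and> w s < w t} = \<Phi> ` (SIGMA r:{1,2,3}. {lo r<..hi r})"
  proof
    show "{t. t < s \<and> w s < w t} \<subseteq> \<Phi> ` (SIGMA r:{1,2,3}. {lo r<..hi r})"
    proof
      fix t assume t: "t \<in> {t. t < s \<and> w s < w t}"
      define r where "r = (t-1) mod 3 + 1"
      define m where "m = (t-1) div 3"
      have tr: "t = r + 3*m" unfolding r_def m_def by simp
      have r: "r \<in> {1,2,3}" unfolding r_def using mod3_cases[of "t-1"] by auto
      have wt: "w t = w r + 3*m" unfolding tr by (rule periodic_m[OF per])
      have "m \<le> hi r" unfolding hi_def le_div3 using t tr by simp
      moreover have "lo r < m" unfolding lo_def div3_lt using t wt by simp
      ultimately show "t \<in> \<Phi> ` (SIGMA r:{1,2,3}. {lo r<..hi r})"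
        unfolding \<Phi>_def using r tr by (auto intro!: image_eqI[of _ _ "(r,m)"])
    qed
  next
    show "\<Phi> ` (SIGMA r:{1,2,3}. {lo r<..hi r}) \<subseteq> {t. t < s \<and> w s < w t}"
    proof
      fix t assume "t \<in> \<Phi> ` (SIGMA r:{1,2,3}. {lo r<..hi r})"
      then obtain p where p: "p \<in> (SIGMA r:{1,2,3}. {lo r<..hi r})" "t = \<Phi> p" by (rule imageE)
      obtain r m where prm: "p = (r,m)" by (cases p)
      have rm: "r \<in> {1,2,3}" "lo r < m" "m \<le> hi r" "t = r + 3*m" using p unfolding prm \<Phi>_def by auto
      have wt: "w t = w r + 3*m" unfolding rm(4) by (rule periodic_m[OF per])
      show "t \<in> {t. t < s \<and> w s < w t}"
        using rm(2,3) wt rm(4) unfolding lo_def hi_def le_div3 div3_lt by simp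
    qed
  qed
  have inj: "inj_on \<Phi> (SIGMA r:{1,2,3}. {lo r<..hi r})"
  proof (rule inj_onI)
    fix p q assume pq: "p \<in> (SIGMA r:{1,2,3}. {lo r<..hi r})" "q \<in> (SIGMA r:{1,2,3}. {lo r<..hi r})" "\<Phi> p = \<Phi> q"
    obtain r m where p: "p = (r,m)" by (cases p)
    obtain r' m' where q: "q = (r',m')" by (cases q)
    have "r \<in> {1,2,3}" "r' \<in> {1,2,3}" "r + 3*m = r' + 3*m'" using pq unfolding p q \<Phi>_def by auto
    then show "p = q" using inj_res unfolding p q by blast
  qed
  have "card {t. t < s \<and> w s < w t} = card (SIGMA r:{1,2,3}. {lo r<..hi r})"
    unfolding eq by (rule card_image[OF inj])
  also have "\<dots> = (\<Sum>r\<in>{1,2,3}. card {lo r<..hi r})" by (rule card_SigmaI) auto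
  also have "\<dots> = (\<Sum>r\<in>{1,2,3::int}. nat ((s-r-1) div 3 - (w s - w r) div 3))"
    unfolding lo_def hi_def by simp
  finally show ?thesis .
qed

definition Dsum :: "(int \<Rightarrow> int) \<Rightarrow> int \<Rightarrow> nat" where
  "Dsum w s = (\<Sum>r\<in>{1,2,3::int}. nat ((s-r-1) div 3 - (w s - w r) div 3))"

lemma D_shift:
  assumes per: "\<forall>i. w (i + 3) = w i + (3::int)"
  shows "Dsum w s = Dsum w ((s-1) mod 3 + 1)"
proof -
  define \<sigma> where "\<sigma> = (s-1) mod 3 + 1"
  define q where "q = (s-1) div 3"
  have s: "s = \<sigma> + 3*q" unfolding \<sigma>_def q_def by simp
  have ws: "w s = w \<sigma> + 3*q" unfolding s by (rule periodic_m[OF per])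
  have "nat ((s-r-1) div 3 - (w s - w r) div 3) = nat ((\<sigma>-r-1) div 3 - (w \<sigma> - w r) div 3)" for r
  proof -
    have "(s-r-1) div 3 = (\<sigma>-r-1 + 3*q) div 3" unfolding s by (simp add: algebra_simps)
    also have "\<dots> = (\<sigma>-r-1) div 3 + q" by simp
    finally have 1: "(s-r-1) div 3 = (\<sigma>-r-1) div 3 + q" .
    have "(w s - w r) div 3 = (w \<sigma> - w r + 3*q) div 3" unfolding ws by (simp add: algebra_simps)
    also have "\<dots> = (w \<sigma> - w r) div 3 + q" by simp
    finally have 2: "(w s - w r) div 3 = (w \<sigma> - w r) div 3 + q" .
    show ?thesis unfolding 1 2 by simp
  qed
  then show ?thesis unfolding Dsum_def \<sigma>_def by simp
qed

lemma code_entry: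
  assumes "bij w"
  shows "card {j. i < j \<and> inv w j < inv w i} = card {t. t < inv w i \<and> w (inv w i) < w t}"
proof -
  have inj: "inj w" and surj: "surj w" using assms bij_is_inj bij_is_surj by auto
  have "{j. i < j \<and> inv w j < inv w i} = w ` {t. t < inv w i \<and> w (inv w i) < w t}"
  proof
    show "{j. i < j \<and> inv w j < inv w i} \<subseteq> w ` {t. t < inv w i \<and> w (inv w i) < w t}"
    proof
      fix j assume j: "j \<in> {j. i < j \<and> inv w j < inv w i}"
      have "j = w (inv w j)" using surj by (simp add: surj_f_inv_f)
      moreover have "inv w j \<in> {t. t < inv w i \<and> w (inv w i) < w t}"
        using j surj by (simp add: surj_f_inv_f)
      ultimately show "j \<in> w ` {t. t < inv w i \<and> w (inv w i) < w t}" by blast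
    qed
  next
    show "w ` {t. t < inv w i \<and> w (inv w i) < w t} \<subseteq> {j. i < j \<and> inv w j < inv w i}"
      using inj surj by (auto simp: surj_f_inv_f inv_f_f)
  qed
  then show ?thesis using card_image[OF inj_on_subset[OF inj]] by simp
qed

lemma negdiv: "x mod 3 \<noteq> y mod 3 \<Longrightarrow> -1 - (x - y) div 3 = (y - x) div (3::int)"
  by presburger

lemma Dvals:
  assumes per: "\<forall>i. w (i + 3) = w i + (3::int)"
    and lt: "w 1 < w 2" "w 2 < w 3" and g: "good3 (w 1) (w 2) (w 3)"
  shows "Dsum w 1 = nat ((w 2 - w 1) div 3) + nat ((w 3 - w 1) div 3)"
    and "Dsum w 2 = nat ((w 3 - w 2) div 3)"
    and "Dsum w 3 = 0"
proof -
  have n: "w 1 mod 3 \<noteq> w 2 mod 3" "w 1 mod 3 \<noteq> w 3 mod 3" "w 2 mod 3 \<noteq> w 3 mod 3" using g good3_def by auto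
  have p: "0 \<le> (w 2 - w 1) div 3" "0 \<le> (w 3 - w 1) div 3" "0 \<le> (w 3 - w 2) div 3" using lt by auto
  show "Dsum w 1 = nat ((w 2 - w 1) div 3) + nat ((w 3 - w 1) div 3)"
    unfolding Dsum_def using negdiv[OF n(1)] negdiv[OF n(2)] by simp
  show "Dsum w 2 = nat ((w 3 - w 2) div 3)"
    unfolding Dsum_def using negdiv[OF n(3)] p by simp
  show "Dsum w 3 = 0"
    unfolding Dsum_def using p by simp
qed

lemma code_D:
  assumes "bij w" and per: "\<forall>i. w (i + 3) = w i + (3::int)"
  shows "code3 (inv w) = map (\<lambda>i. Dsum w ((inv w i - 1) mod 3 + 1)) [1,2,3]"
proof -
  have "card {j. i < j \<and> inv w j < inv w i} = Dsum w ((inv w i - 1) mod 3 + 1)" for i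
  proof -
    have "card {j. i < j \<and> inv w j < inv w i} = card {t. t < inv w i \<and> w (inv w i) < w t}"
      by (rule code_entry[OF assms(1)])
    also have "\<dots> = Dsum w (inv w i)" unfolding D_formula[OF per] Dsum_def ..
    also have "\<dots> = Dsum w ((inv w i - 1) mod 3 + 1)" by (rule D_shift[OF per])
    finally show ?thesis .
  qed
  then show ?thesis unfolding code3_def by simp
qed

lemma sigma_inj:
  fixes w :: "int \<Rightarrow> int"
  assumes "bij w" and per: "\<forall>i. w (i + 3) = w i + (3::int)"
    and ij: "i \<in> {1,2,3}" "j \<in> {1,2,3}"
    and eq: "(inv w i - 1) mod 3 + 1 = (inv w j - 1) mod 3 + 1"
  shows "i = j"
proof -
  have surj: "surj w" using assms bij_is_surj by auto
  have "(inv w j - 1) mod 3 = (inv w i - 1) mod 3" using eq by simp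
  then have "3 dvd (inv w j - 1) - (inv w i - 1)" using mod_eq_dvd_iff by blast
  then obtain q where q: "inv w j - inv w i = 3*q" by auto
  then have "inv w j = inv w i + 3*q" by simp
  then have "w (inv w j) = w (inv w i) + 3*q" using periodic_m[OF per] by simp
  then have "j + 3*0 = i + 3*q" using surj by (simp add: surj_f_inv_f)
  then show ?thesis using inj_res[OF ij(2,1)] by blast
qed

lemma perm3: "p1 \<in> {1,2,3} \<Longrightarrow> p2 \<in> {1,2,3} \<Longrightarrow> p3 \<in> {1,2,3::int} \<Longrightarrow> p1 \<noteq> p2 \<Longrightarrow> p1 \<noteq> p3 \<Longrightarrow> p2 \<noteq> p3 \<Longrightarrow>
  [f p1, f p2, f p3] \<in> {[f 1, f 2, f 3],[f 1, f 3, f 2],[f 2, f 1, f 3],[f 2, f 3, f 1],[f 3, f 1, f 2],[f 3, f 2, f 1]}"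
  by (elim insertE emptyE; simp)

lemma conj3: "q \<le> p \<Longrightarrow> conj_part [p, q, 0] = replicate q 2 @ replicate (p - q) (1::nat)"
proof -
  assume qp: "q \<le> p"
  have M: "Max (set (0 # [p, q, 0])) = p" using qp by (simp add: max_def)
  show ?thesis unfolding conj_part_def M
  proof (rule nth_equalityI)
    show "length (map (\<lambda>k. length (filter ((\<le>) k) [p, q, 0])) [1..<Suc p]) = length (replicate q 2 @ replicate (p - q) (1::nat))"
      using qp by simp
  next
    fix k assume "k < length (map (\<lambda>k. length (filter ((\<le>) k) [p, q, 0])) [1..<Suc p])"
    then have k: "k < p" by (simp only: length_map length_upt)
    show "map (\<lambda>k. length (filter ((\<le>) k) [p, q, 0])) [1..<Suc p] ! k = (replicate q 2 @ replicate (p - q) (1::nat)) ! k"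
      using k qp by (simp add: nth_append; arith)
  qed
qed

lemma rep_eq: "replicate a 2 @ replicate b 1 = replicate a' 2 @ replicate b' (1::nat) \<Longrightarrow> a = a' \<and> b = b'"
proof -
  assume h: "replicate a 2 @ replicate b 1 = replicate a' 2 @ replicate b' (1::nat)"
  have "length (filter (\<lambda>x. x = 2) (replicate a 2 @ replicate b (1::nat))) = length (filter (\<lambda>x. x = 2) (replicate a' 2 @ replicate b' (1::nat)))"
    using h by simp
  then have "a = a'" by (simp add: filter_replicate)
  moreover have "length (replicate a 2 @ replicate b (1::nat)) = length (replicate a' 2 @ replicate b' (1::nat))" using h by simp
  ultimately show ?thesis by simp
qed

lemma mod_ne0: "x mod 3 \<noteq> y mod 3 \<Longrightarrow> (y - x) mod (3::int) \<noteq> 0"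
  using mod_eq_dvd_iff[of y 3 x] by (auto simp: dvd_eq_mod_eq_0)

lemma solve:
  fixes x1 x2 x3 :: int and a b :: nat
  assumes lt: "x1 < x2" "x2 < x3" and g: "good3 x1 x2 x3" and sum: "x1 + x2 + x3 = 6"
    and ha: "nat ((x3-x2) div 3) = a" and hb: "nat ((x2-x1) div 3) + nat ((x3-x1) div 3) = a + b"
  shows "fw x1 x2 x3 = F a b"
proof -
  have n: "x1 mod 3 \<noteq> x2 mod 3" "x1 mod 3 \<noteq> x3 mod 3" "x2 mod 3 \<noteq> x3 mod 3" using g good3_def by auto
  define u where "u = (x2-x1) div 3"
  define e where "e = (x2-x1) mod 3"
  define e' where "e' = (x3-x2) mod 3"
  have u0: "0 \<le> u" unfolding u_def using lt by simp
  have a0: "(x3-x2) div 3 = int a" using ha lt by simp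
  have d1: "x2 - x1 = 3*u + e" unfolding u_def e_def by simp
  have d2: "x3 - x2 = 3*int a + e'" unfolding e'_def a0[symmetric] by simp
  have e: "e = 1 \<or> e = 2" using mod_ne0[OF n(1)] unfolding e_def using mod3_cases[of "x2-x1"] by auto
  have e': "e' = 1 \<or> e' = 2" using mod_ne0[OF n(3)] unfolding e'_def using mod3_cases[of "x3-x2"] by auto
  have d3: "x3 - x1 = 3*(u + int a) + (e + e')" using d1 d2 by simp
  have ee: "e = e'"
  proof (rule ccontr)
    assume "e \<noteq> e'"
    then have "e + e' = 3" using e e' by auto
    then have "x3 - x1 = 3*(u + int a + 1)" using d3 by simp
    then have "(x3 - x1) mod 3 = 0" by simp
    then show False using mod_ne0[OF n(2)] by simp
  qed
  show ?thesis
  proof (cases "e = 1")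
    case True
    have "(x3 - x1) div 3 = u + int a" using d3 ee True by simp
    then have b: "b = 2 * nat u" using hb u0 unfolding u_def[symmetric] by simp
    have x1: "x1 = 1 - int a - int b" using sum d1 d2 ee True b u0 by simp
    have x2: "x2 = 2 - int a + int (b div 2)" using x1 d1 True b u0 by simp
    have x3: "x3 = 3 + 2*int a + int ((b+1) div 2)" using x2 d2 ee True b u0 by simp
    show ?thesis unfolding F_def x1 x2 x3 ..
  next
    case False
    then have e2: "e = 2" using e by simp
    have "(x3 - x1) div 3 = u + int a + 1" using d3 ee e2 by simp
    then have b: "b = 2 * nat u + 1" using hb u0 unfolding u_def[symmetric] by simp
    have x1: "x1 = 1 - int a - int b" using sum d1 d2 ee e2 b u0 by simp
    have x2: "x2 = 2 - int a + int (b div 2)" using x1 d1 e2 b u0 by simp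
    have x3: "x3 = 3 + 2*int a + int ((b+1) div 2)" using x2 d2 ee e2 b u0 by simp
    show ?thesis unfolding F_def x1 x2 x3 ..
  qed
qed

lemma res_inj:
  fixes w :: "int \<Rightarrow> int"
  assumes "inj w" and per: "\<forall>i. w (i + 3) = w i + (3::int)"
    and ij: "i \<in> {1,2,3}" "j \<in> {1,2,3}" and eq: "w i mod 3 = w j mod 3"
  shows "i = j"
proof -
  have "3 dvd w j - w i" using eq mod_eq_dvd_iff by metis
  then obtain q where q: "w j - w i = 3*q" by auto
  then have "w j = w (i + 3*q)" using periodic_m[OF per] by simp
  then have "j + 3*0 = i + 3*q" using assms(1) by (simp add: inj_eq)
  then show ?thesis using inj_res[OF ij(2,1)] by blast
qed

theorem proposition3p6:
  fixes a b :: nat and w :: "int \<Rightarrow> int"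
  assumes "affine_perm3 w"
    and "affine_grassmannian w"
    and "lam w = replicate a 2 @ replicate b 1"
  shows "card (reduced_words w) = nat \<lfloor>real b / 2 + real a\<rfloor> choose a"
proof -
  from assms(1) have bij: "bij w" and per: "\<forall>i. w (i+3) = w i + 3" and s6: "w 1 + w 2 + w 3 = 6"
    by (auto simp: affine_perm3_def)
  from assms(2) have lt: "w 1 < w 2" "w 2 < w 3" by (auto simp: affine_grassmannian_def)
  have inj: "inj w" using bij bij_is_inj by auto
  have g: "good3 (w 1) (w 2) (w 3)"
  proof -
    have "w i mod 3 \<noteq> w j mod 3" if "i \<in> {1,2,3}" "j \<in> {1,2,3}" "i \<noteq> j" for i j
      using res_inj[OF inj per that(1,2)] that(3) by blast
    then show ?thesis unfolding good3_def by simp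
  qed
  define \<sigma> where "\<sigma> i = (inv w i - 1) mod 3 + 1" for i
  have \<sigma>r: "\<sigma> i \<in> {1,2,3}" for i unfolding \<sigma>_def using mod3_cases[of "inv w i - 1"] by auto
  have \<sigma>d: "\<sigma> 1 \<noteq> \<sigma> 2" "\<sigma> 1 \<noteq> \<sigma> 3" "\<sigma> 2 \<noteq> \<sigma> 3"
  proof -
    have "\<sigma> i \<noteq> \<sigma> j" if "i \<in> {1,2,3}" "j \<in> {1,2,3}" "i \<noteq> j" for i j
      using sigma_inj[OF bij per that(1,2)] that(3) unfolding \<sigma>_def by blast
    then show "\<sigma> 1 \<noteq> \<sigma> 2" "\<sigma> 1 \<noteq> \<sigma> 3" "\<sigma> 2 \<noteq> \<sigma> 3" by simp_all
  qed
  have code: "code3 (inv w) = [Dsum w (\<sigma> 1), Dsum w (\<sigma> 2), Dsum w (\<sigma> 3)]"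
    unfolding code_D[OF bij per] \<sigma>_def by simp
  note Dv = Dvals[OF per lt g]
  define D1 where "D1 = nat ((w 2 - w 1) div 3) + nat ((w 3 - w 1) div 3)"
  define D2 where "D2 = nat ((w 3 - w 2) div 3)"
  have D21: "D2 \<le> D1"
  proof -
    have "(w 3 - w 2) div 3 \<le> (w 3 - w 1) div 3" using lt by (intro zdiv_mono1) auto
    then show ?thesis unfolding D1_def D2_def by linarith
  qed
  have P: "[Dsum w (\<sigma> 1), Dsum w (\<sigma> 2), Dsum w (\<sigma> 3)] \<in> {[Dsum w 1, Dsum w 2, Dsum w 3],[Dsum w 1, Dsum w 3, Dsum w 2],[Dsum w 2, Dsum w 1, Dsum w 3],[Dsum w 2, Dsum w 3, Dsum w 1],[Dsum w 3, Dsum w 1, Dsum w 2],[Dsum w 3, Dsum w 2, Dsum w 1]}"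
    by (rule perm3[OF \<sigma>r \<sigma>r \<sigma>r \<sigma>d])
  have le1: "Dsum w 3 \<le> Dsum w 2" using Dv(3) by simp
  have le2: "Dsum w 2 \<le> Dsum w 1" using Dv(1,2) D21 unfolding D1_def D2_def by simp
  have "rev (sort (code3 (inv w))) = [Dsum w 1, Dsum w 2, Dsum w 3]"
    unfolding code by (rule sort3[OF le1 le2 P])
  then have "lam w = replicate D2 2 @ replicate (D1 - D2) 1"
    unfolding lam_def using Dv conj3[OF D21] D1_def D2_def by simp
  then have ab: "a = D2" "b = D1 - D2" using assms(3) rep_eq by metis+
  have wF: "w = F a b"
  proof -
    have "fw (w 1) (w 2) (w 3) = F a b"
      by (rule solve[OF lt g s6]) (use ab D21 D1_def D2_def in auto)
    with periodic_fw[OF per] show ?thesis by (rule trans)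
  qed
  have cnt: "card (Sn w (2*a+b)) = (b div 2 + a) choose a" unfolding wF by (rule count_F)
  have "0 < card (Sn w (2*a+b))" unfolding cnt by (rule zero_less_binomial) simp
  then obtain ws0 where ws0: "ws0 \<in> Sn w (2*a+b)" by (metis card_gt_0_iff ex_in_conv)
  have Lw: "Lf w = 2*a+b" unfolding wF by (rule Lf_F)
  have al: "affine_length w = 2*a+b"
    unfolding affine_length_def
  proof (rule Least_equality)
    show "\<exists>ws. is_word ws \<and> length ws = 2*a+b \<and> word_prod ws = w" using ws0 unfolding Sn_def by auto
  next
    fix n assume "\<exists>ws. is_word ws \<and> length ws = n \<and> word_prod ws = w"
    then obtain ws where "length ws = n" "word_prod ws = w" by auto
    then show "2*a+b \<le> n" using Lf_word[of ws] Lw by simp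
  qed
  have rw: "reduced_words w = Sn w (2*a+b)" unfolding reduced_words_def Sn_def al ..
  have f1: "\<lfloor>real b / 2\<rfloor> = int (b div 2)" using floor_divide_of_nat_eq[of b 2] by simp
  have f2: "\<lfloor>real b / 2 + real a\<rfloor> = \<lfloor>real b / 2\<rfloor> + int a" using floor_add_int[of "real b / 2" "int a"] by simp
  have "nat \<lfloor>real b / 2 + real a\<rfloor> = b div 2 + a" unfolding f2 f1 by simp
  then show ?thesis unfolding rw cnt by simp
qed

end
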